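(* Let $P\subset N_{\mathbb{R}}$ be a lattice polytope. If $(m,Q)$ is a deformation pair of $P$, then there exist Laurent polynomials $f,g\in\mathbb{C}[N]$ with $\Delta(f)=P$ and $\Delta(g)=Q$ such that $f$ is $(m,g)$-mutable. Conversely, if a Laurent polynomial $f$ is $(m,g)$-mutable, then $(m,\Delta(g))$ is a deformation pair of $\Delta(f)$.
   Context: $N\cong\mathbb{Z}^n$ a lattice, $M$ its dual, $\widetilde M=M\oplus\mathbb{Z}$ with projections $\pi_M,\pi_{\mathbb{Z}}$. For $m\in\widetilde M$, $\varphi_m(n)=\langle\pi_M(m),n\rangle+\pi_{\mathbb{Z}}(m)$ and $(\pi_M(m)=0)=\{n\in N_{\mathbb{R}}:\langle\pi_M(m),n\rangle=0\}$. $\Delta(h)$ denotes the Newton polytope; Laurent polynomials are normalized (coefficient $1$ at each vertex of the Newton polytope). A deformation pair of $P$ is $(m,Q)$ with $m\in\widetilde M$ and $Q\subset(\pi_M(m)=0)$ a lattice polytope such that for every $i\in\mathbb{N}$ with $P\cap(\varphi_m=i)\ne\emptyset$, $iQ$ is a Minkowski summand of $P\cap(\varphi_m=i)$. For $g$ with $\Delta(g)\subset(\pi_M(m)=0)$, $f$ is $(m,g)$-mutable if $f=\sum_{i\in\mathbb{Z}}f_i$ with $f_i\in\mathbb{C}[(\varphi_m=i)\cap N]$ and, for every $i\in\mathbb{N}$, $f_i=h_ig^i$ for some Laurent polynomial $h_i$. *)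

theory Defs
  imports "HOL-Analysis.Analysis" "HOL-Library.Poly_Mapping"
begin

text \<open>The lattice N = Z^n is modelled as int ^ 'n (for an arbitrary finite index type 'n),
  N_R = real ^ 'n.  The dual lattice M is also int ^ 'n, paired via the standard dot product.
  An element m of M~ = M (+) Z is a pair (u, c) with pi_M m = u and pi_Z m = c.
  Laurent polynomials in C[N] are finitely supported maps N \<Rightarrow>0 complex; the product
  of poly_mapping is the convolution, i.e. the product of Laurent polynomials.\<close>

type_synonym 'n laurent = "(int ^ 'n) \<Rightarrow>\<^sub>0 complex"

definition lat_emb :: "int ^ ('n::finite) \<Rightarrow> real ^ 'n" where
  "lat_emb v = (\<chi> i. real_of_int (v $ i))"

definition lattice_points :: "(real ^ 'n) set" where
  "lattice_points = range lat_emb"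

definition lattice_polytope :: "(real ^ 'n) set \<Rightarrow> bool" where
  "lattice_polytope P \<longleftrightarrow> (\<exists>S. finite S \<and> S \<noteq> {} \<and> S \<subseteq> lattice_points \<and> P = convex hull S)"

definition pairM :: "(int ^ 'n) \<times> int \<Rightarrow> real ^ 'n \<Rightarrow> real" where
  "pairM m x = (\<Sum>i\<in>UNIV. real_of_int (fst m $ i) * x $ i)"

definition phi :: "(int ^ 'n) \<times> int \<Rightarrow> real ^ 'n \<Rightarrow> real" where
  "phi m x = pairM m x + real_of_int (snd m)"

definition hyp0 :: "(int ^ 'n) \<times> int \<Rightarrow> (real ^ 'n) set" where
  "hyp0 m = {x. pairM m x = 0}"

definition level :: "(int ^ 'n) \<times> int \<Rightarrow> int \<Rightarrow> (real ^ 'n) set" where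
  "level m i = {x. phi m x = real_of_int i}"

definition minkowski_sum :: "(real ^ 'n) set \<Rightarrow> (real ^ 'n) set \<Rightarrow> (real ^ 'n) set" where
  "minkowski_sum A B = {a + b | a b. a \<in> A \<and> b \<in> B}"

definition minkowski_summand :: "(real ^ 'n) set \<Rightarrow> (real ^ 'n) set \<Rightarrow> bool" where
  "minkowski_summand A B \<longleftrightarrow> (\<exists>C. polytope C \<and> B = minkowski_sum A C)"

definition deformation_pair ::
  "(real ^ 'n) set \<Rightarrow> (int ^ 'n) \<times> int \<Rightarrow> (real ^ 'n) set \<Rightarrow> bool" where
  "deformation_pair P m Q \<longleftrightarrow>
     lattice_polytope Q \<and> Q \<subseteq> hyp0 m \<and>
     (\<forall>i::nat. P \<inter> level m (int i) \<noteq> {} \<longrightarrow>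
        minkowski_summand ((\<lambda>x. real i *\<^sub>R x) ` Q) (P \<inter> level m (int i)))"

definition newton :: "('n::finite) laurent \<Rightarrow> (real ^ 'n) set" where
  "newton f = convex hull (lat_emb ` Poly_Mapping.keys f)"

definition normalized :: "('n::finite) laurent \<Rightarrow> bool" where
  "normalized f \<longleftrightarrow> (\<forall>v. lat_emb v extreme_point_of newton f \<longrightarrow> Poly_Mapping.lookup f v = 1)"

definition mutable :: "('n::finite) laurent \<Rightarrow> (int ^ 'n) \<times> int \<Rightarrow> 'n laurent \<Rightarrow> bool" where
  "mutable f m g \<longleftrightarrow>
     (\<exists>fi :: int \<Rightarrow> 'n laurent.
        (\<forall>i. lat_emb ` Poly_Mapping.keys (fi i) \<subseteq> level m i) \<and>
        finite {i. fi i \<noteq> 0} \<and>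
        f = (\<Sum>i\<in>{i. fi i \<noteq> 0}. fi i) \<and>
        (\<forall>i::nat. \<exists>h. fi (int i) = h * g ^ i))"

end

theory Submission
  imports Defs
begin

lemma lat_emb_add: "lat_emb (a + b) = lat_emb a + lat_emb b"
  by (simp add: lat_emb_def vec_eq_iff)
lemma lat_emb_diff: "lat_emb (a - b) = lat_emb a - lat_emb b"
  by (simp add: lat_emb_def vec_eq_iff)
lemma lat_emb_zero: "lat_emb 0 = 0"
  by (simp add: lat_emb_def vec_eq_iff)
lemma lat_emb_inj: "inj lat_emb"
  by (auto simp: inj_on_def lat_emb_def vec_eq_iff)
lemma lat_emb_eq_iff: "lat_emb a = lat_emb b \<longleftrightarrow> a = b"
  using lat_emb_inj by (auto simp: inj_on_def)

definition smul :: "nat \<Rightarrow> int ^ 'n \<Rightarrow> int ^ 'n" where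
  "smul n q = (\<chi> i. int n * q $ i)"
lemma lat_emb_smul: "lat_emb (smul n q) = real n *\<^sub>R lat_emb q"
  by (simp add: lat_emb_def smul_def vec_eq_iff)
lemma smul_Suc: "smul (Suc n) q = q + smul n q"
  by (simp add: smul_def vec_eq_iff algebra_simps)
lemma smul_0: "smul 0 q = 0"
  by (simp add: smul_def vec_eq_iff)

lemma minkowski_sum_alt: "minkowski_sum A B = (\<Union>x\<in>A. \<Union>y\<in>B. {x + y})"
  by (auto simp: minkowski_sum_def)

lemma convex_minkowski_sum: "convex A \<Longrightarrow> convex B \<Longrightarrow> convex (minkowski_sum A B)"
  by (simp add: minkowski_sum_alt convex_sums)

lemma compact_minkowski_sum: "compact A \<Longrightarrow> compact B \<Longrightarrow> compact (minkowski_sum A B)"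
  by (simp add: minkowski_sum_alt compact_sums')

lemma finite_keys_newton: "compact (newton f)" "convex (newton f)"
  by (auto simp: newton_def finite_imp_compact_convex_hull)

lemma keys_in_newton: "k \<in> Poly_Mapping.keys f \<Longrightarrow> lat_emb k \<in> newton f"
  unfolding newton_def by (simp add: hull_inc)

lemma newton_mult_subset:
  "newton (h * k) \<subseteq> minkowski_sum (newton h) (newton k)"
proof -
  have "lat_emb ` Poly_Mapping.keys (h * k) \<subseteq> minkowski_sum (newton h) (newton k)"
  proof
    fix x assume "x \<in> lat_emb ` Poly_Mapping.keys (h * k)"
    then obtain w where w: "w \<in> Poly_Mapping.keys (h * k)" "x = lat_emb w" by auto
    then obtain a b where "a \<in> Poly_Mapping.keys h" "b \<in> Poly_Mapping.keys k" "w = a + b"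
      using keys_mult by blast
    then show "x \<in> minkowski_sum (newton h) (newton k)"
      using w keys_in_newton unfolding minkowski_sum_def by (force simp: lat_emb_add)
  qed
  then show ?thesis unfolding newton_def[of "h*k"]
    by (intro hull_minimal) (auto intro!: convex_minkowski_sum finite_keys_newton)
qed

lemma extreme_midpoint:
  assumes "x extreme_point_of S" "a \<in> S" "b \<in> S" "x = midpoint a b"
  shows "a = b"
  using assms midpoint_in_open_segment unfolding extreme_point_of_def by blast

lemma extreme_minkowski_decomp:
  assumes "x extreme_point_of minkowski_sum A B" "a \<in> A" "b \<in> B" "x = a + b"
  shows "a extreme_point_of A \<and> b extreme_point_of B"
proof -
  have "a extreme_point_of A"
    unfolding extreme_point_of_def
  proof (intro conjI ballI notI)
    fix a1 a2 assume h: "a1 \<in> A" "a2 \<in> A" "a \<in> open_segment a1 a2"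
    then have "b + a \<in> open_segment (b + a1) (b + a2)"
      by (simp add: open_segment_translation)
    moreover have "b + a1 \<in> minkowski_sum A B" "b + a2 \<in> minkowski_sum A B"
      using h assms unfolding minkowski_sum_def by (auto simp: add.commute)
    ultimately show False using assms unfolding extreme_point_of_def by (auto simp: add.commute)
  qed (use assms in auto)
  moreover have "b extreme_point_of B"
    unfolding extreme_point_of_def
  proof (intro conjI ballI notI)
    fix a1 a2 assume h: "a1 \<in> B" "a2 \<in> B" "b \<in> open_segment a1 a2"
    then have i: "a + b \<in> open_segment (a + a1) (a + a2)"
      by (simp add: open_segment_translation)
    have "a + a1 \<in> minkowski_sum A B" "a + a2 \<in> minkowski_sum A B"
      using h assms unfolding minkowski_sum_def by auto
    then have "x \<notin> open_segment (a + a1) (a + a2)" using assms(1) unfolding extreme_point_of_def by blast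
    then show False using i assms(4) by simp
  qed (use assms in auto)
  ultimately show ?thesis by blast
qed

lemma vertex_coeff:
  fixes h k :: "'n::finite laurent"
  assumes ext: "lat_emb w extreme_point_of minkowski_sum (newton h) (newton k)"
    and a: "a \<in> Poly_Mapping.keys h" and b: "b \<in> Poly_Mapping.keys k" and w: "a + b = w"
  shows "Poly_Mapping.lookup (h * k) w = Poly_Mapping.lookup h a * Poly_Mapping.lookup k b"
proof -
  have uniq: "l = a" if l: "l \<in> Poly_Mapping.keys h" "w - l \<in> Poly_Mapping.keys k" for l
  proof -
    have m1: "lat_emb l + lat_emb b \<in> minkowski_sum (newton h) (newton k)"
      using l b keys_in_newton unfolding minkowski_sum_def by blast
    have m2: "lat_emb a + lat_emb (w - l) \<in> minkowski_sum (newton h) (newton k)"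
      using l a keys_in_newton unfolding minkowski_sum_def by blast
    have ab: "lat_emb a + lat_emb b = lat_emb w" using w lat_emb_add by metis
    have s: "(lat_emb l + lat_emb b) + (lat_emb a + lat_emb (w - l)) = 2 *\<^sub>R lat_emb w"
      by (simp add: lat_emb_diff scaleR_2 ab[symmetric] algebra_simps)
    have "lat_emb w = midpoint (lat_emb l + lat_emb b) (lat_emb a + lat_emb (w - l))"
      by (simp add: midpoint_def s)
    then have "lat_emb l + lat_emb b = lat_emb a + lat_emb (w - l)"
      using extreme_midpoint[OF ext m1 m2] by simp
    then have "2 *\<^sub>R lat_emb l = 2 *\<^sub>R lat_emb a"
      by (simp add: lat_emb_diff ab[symmetric] algebra_simps scaleR_2)
    then show ?thesis by (simp add: lat_emb_eq_iff)
  qed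
  have "Poly_Mapping.lookup (h * k) w =
      (\<Sum>l. Poly_Mapping.lookup h l * Poly_Mapping.lookup k (w - l))"
  proof -
    have "\<And>l. (\<Sum>q. Poly_Mapping.lookup k q when w = l + q) = Poly_Mapping.lookup k (w - l)"
    proof -
      fix l
      have "(\<lambda>q. Poly_Mapping.lookup k q when w = l + q) = (\<lambda>q. Poly_Mapping.lookup k q when q = w - l)"
        by (auto simp: when_def fun_eq_iff algebra_simps)
      then show "(\<Sum>q. Poly_Mapping.lookup k q when w = l + q) = Poly_Mapping.lookup k (w - l)"
        by (metis Sum_any_when_equal)
    qed
    then show ?thesis by (simp add: lookup_mult)
  qed
  also have "(\<lambda>l. Poly_Mapping.lookup h l * Poly_Mapping.lookup k (w - l))
       = (\<lambda>l. Poly_Mapping.lookup h a * Poly_Mapping.lookup k b when l = a)"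
  proof
    fix l
    show "Poly_Mapping.lookup h l * Poly_Mapping.lookup k (w - l)
       = (Poly_Mapping.lookup h a * Poly_Mapping.lookup k b when l = a)"
    proof (cases "l = a")
      case True
      have "w - a = b" using w by (simp add: algebra_simps)
      then show ?thesis using True by simp
    next
      case False
      then have "Poly_Mapping.lookup h l = 0 \<or> Poly_Mapping.lookup k (w - l) = 0"
        using uniq by (auto simp: in_keys_iff)
      then show ?thesis using False by auto
    qed
  qed
  finally show ?thesis by simp
qed

lemma newton_mult:
  fixes h k :: "'n::finite laurent"
  shows "newton (h * k) = minkowski_sum (newton h) (newton k)"
proof
  show "newton (h * k) \<subseteq> minkowski_sum (newton h) (newton k)" by (rule newton_mult_subset)
next
  let ?M = "minkowski_sum (newton h) (newton k)"
  have cc: "compact ?M" "convex ?M"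
    by (auto intro!: compact_minkowski_sum convex_minkowski_sum finite_keys_newton)
  have "{x. x extreme_point_of ?M} \<subseteq> newton (h * k)"
  proof
    fix x assume "x \<in> {x. x extreme_point_of ?M}"
    then have ext: "x extreme_point_of ?M" by simp
    then have "x \<in> ?M" by (simp add: extreme_point_of_def)
    then obtain a b where ab: "a \<in> newton h" "b \<in> newton k" "x = a + b"
      unfolding minkowski_sum_def by blast
    then have "a extreme_point_of newton h" "b extreme_point_of newton k"
      using extreme_minkowski_decomp[OF ext] by auto
    then have "a \<in> lat_emb ` Poly_Mapping.keys h" "b \<in> lat_emb ` Poly_Mapping.keys k"
      unfolding newton_def using extreme_point_of_convex_hull by blast+
    then obtain a' b' where a': "a' \<in> Poly_Mapping.keys h" "a = lat_emb a'"
      and b': "b' \<in> Poly_Mapping.keys k" "b = lat_emb b'" by blast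
    have xe: "x = lat_emb (a' + b')" using ab a' b' by (simp add: lat_emb_add)
    have "Poly_Mapping.lookup (h * k) (a' + b') = Poly_Mapping.lookup h a' * Poly_Mapping.lookup k b'"
      by (rule vertex_coeff[OF _ a'(1) b'(1) refl]) (use ext xe in simp)
    also have "\<dots> \<noteq> 0" using a' b' by (simp add: in_keys_iff)
    finally have "a' + b' \<in> Poly_Mapping.keys (h * k)" by (simp add: in_keys_iff)
    then show "x \<in> newton (h * k)" using xe keys_in_newton by simp
  qed
  then have "convex hull {x. x extreme_point_of ?M} \<subseteq> newton (h * k)"
    by (intro hull_minimal) (auto intro: finite_keys_newton)
  then show "?M \<subseteq> newton (h * k)"
    using Krein_Milman_Minkowski[OF cc] by simp
qed

lemma minkowski_sum_scale:
  fixes A :: "(real ^ 'n) set"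
  assumes "convex A"
  shows "minkowski_sum A ((\<lambda>x. real k *\<^sub>R x) ` A) = (\<lambda>x. real (Suc k) *\<^sub>R x) ` A"
proof
  show "minkowski_sum A ((\<lambda>x. real k *\<^sub>R x) ` A) \<subseteq> (\<lambda>x. real (Suc k) *\<^sub>R x) ` A"
  proof
    fix z assume "z \<in> minkowski_sum A ((\<lambda>x. real k *\<^sub>R x) ` A)"
    then obtain a b where ab: "a \<in> A" "b \<in> A" "z = a + real k *\<^sub>R b"
      unfolding minkowski_sum_def by blast
    define u where "u = (1 / real (Suc k)) *\<^sub>R a + (real k / real (Suc k)) *\<^sub>R b"
    have "u \<in> A" unfolding u_def
      by (rule convexD[OF assms ab(1) ab(2)]) (auto simp: field_simps)
    moreover have "z = real (Suc k) *\<^sub>R u"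
      unfolding u_def ab(3) by (simp add: scaleR_add_right)
    ultimately show "z \<in> (\<lambda>x. real (Suc k) *\<^sub>R x) ` A" by blast
  qed
next
  show "(\<lambda>x. real (Suc k) *\<^sub>R x) ` A \<subseteq> minkowski_sum A ((\<lambda>x. real k *\<^sub>R x) ` A)"
  proof
    fix z assume "z \<in> (\<lambda>x. real (Suc k) *\<^sub>R x) ` A"
    then obtain q where q: "q \<in> A" "z = real (Suc k) *\<^sub>R q" by blast
    then have "z = q + real k *\<^sub>R q" by (simp add: algebra_simps)
    then show "z \<in> minkowski_sum A ((\<lambda>x. real k *\<^sub>R x) ` A)"
      unfolding minkowski_sum_def using q by blast
  qed
qed

lemma newton_nonempty: "g \<noteq> 0 \<Longrightarrow> newton g \<noteq> {}"
  unfolding newton_def by (simp add: keys_eq_empty)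

lemma newton_one: "newton (1 :: 'n::finite laurent) = {0}"
  unfolding newton_def by (simp add: lat_emb_zero)

lemma newton_power:
  fixes g :: "'n::finite laurent"
  assumes "g \<noteq> 0"
  shows "newton (g ^ n) = (\<lambda>x. real n *\<^sub>R x) ` newton g"
proof (induction n)
  case 0
  then show ?case using newton_nonempty[OF assms] by (auto simp: newton_one)
next
  case (Suc n)
  have "newton (g ^ Suc n) = minkowski_sum (newton g) (newton (g ^ n))"
    by (simp add: newton_mult)
  also have "\<dots> = (\<lambda>x. real (Suc n) *\<^sub>R x) ` newton g"
    using Suc by (simp add: minkowski_sum_scale finite_keys_newton)
  finally show ?case .
qed

lemma extreme_scale:
  fixes A :: "(real ^ 'n) set"
  assumes "c \<noteq> 0"
  shows "(c *\<^sub>R q) extreme_point_of ((\<lambda>x. c *\<^sub>R x) ` A) \<longleftrightarrow> q extreme_point_of A"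
proof -
  have lin: "linear (\<lambda>x::real^'n. c *\<^sub>R x)" by (simp add: linear_scaleR)
  have inj: "inj (\<lambda>x::real^'n. c *\<^sub>R x)" using assms by (simp add: inj_on_def)
  have seg: "open_segment (c *\<^sub>R a) (c *\<^sub>R b) = (\<lambda>x. c *\<^sub>R x) ` open_segment a b" for a b :: "real^'n"
    using open_segment_linear_image[OF lin inj] by simp
  have mem: "c *\<^sub>R y \<in> (\<lambda>x. c *\<^sub>R x) ` S \<longleftrightarrow> y \<in> S" for y :: "real^'n" and S
    using inj by (auto simp: inj_on_def)
  show ?thesis
    unfolding extreme_point_of_def by (auto simp: seg mem)
qed

lemma power_vertex:
  fixes g :: "'n::finite laurent"
  assumes ng: "normalized g" and g0: "g \<noteq> 0" and q: "lat_emb q extreme_point_of newton g"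
  shows "Poly_Mapping.lookup (g ^ n) (smul n q) = 1"
proof (induction n)
  case 0
  then show ?case by (simp add: smul_0 lookup_one)
next
  case (Suc n)
  have gq: "Poly_Mapping.lookup g q = 1" using ng q unfolding normalized_def by blast
  have k1: "q \<in> Poly_Mapping.keys g" using gq by (simp add: in_keys_iff)
  have k2: "smul n q \<in> Poly_Mapping.keys (g ^ n)" using Suc by (simp add: in_keys_iff)
  have "lat_emb (smul (Suc n) q) extreme_point_of (\<lambda>x. real (Suc n) *\<^sub>R x) ` newton g"
    unfolding lat_emb_smul by (rule iffD2[OF extreme_scale q]) simp
  also have "(\<lambda>x. real (Suc n) *\<^sub>R x) ` newton g = minkowski_sum (newton g) (newton (g ^ n))"
    by (simp add: newton_power[OF g0] minkowski_sum_scale finite_keys_newton)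
  finally have ext: "lat_emb (smul (Suc n) q) extreme_point_of minkowski_sum (newton g) (newton (g ^ n))" .
  have "Poly_Mapping.lookup (g * g ^ n) (smul (Suc n) q) = Poly_Mapping.lookup g q * Poly_Mapping.lookup (g ^ n) (smul n q)"
    by (rule vertex_coeff[OF ext k1 k2]) (simp add: smul_Suc)
  then show ?case using gq Suc by simp
qed

lemma pairM_add: "pairM m (x + y) = pairM m x + pairM m y"
  by (simp add: pairM_def sum.distrib algebra_simps)
lemma pairM_diff: "pairM m (x - y) = pairM m x - pairM m y"
  by (simp add: pairM_def sum_subtractf algebra_simps)
lemma pairM_scale: "pairM m (c *\<^sub>R x) = c * pairM m x"
  by (simp add: pairM_def sum_distrib_left algebra_simps)
lemma phi_add_hyp: "pairM m y = 0 \<Longrightarrow> phi m (x + y) = phi m x"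
  by (simp add: phi_def pairM_add)

lemma pairM_inner: "pairM m x = (\<chi> j. real_of_int (fst m $ j)) \<bullet> x"
  by (simp add: pairM_def inner_vec_def)

lemma level_eq: "level m i = {x. (\<chi> j. real_of_int (fst m $ j)) \<bullet> x = real_of_int i - real_of_int (snd m)}"
  by (auto simp: level_def phi_def pairM_inner)

lemma polyhedron_level: "polyhedron (level m i)"
  unfolding level_eq by (rule polyhedron_hyperplane)

lemma convex_level: "convex (level m i)"
  unfolding level_eq by (rule convex_hyperplane)

definition lvl :: "(int ^ 'n) \<times> int \<Rightarrow> int ^ 'n \<Rightarrow> int" where
  "lvl m k = (\<Sum>i\<in>UNIV. fst m $ i * k $ i) + snd m"

lemma lat_emb_level: "lat_emb k \<in> level m (lvl m k)"
  by (simp add: level_def phi_def pairM_def lvl_def lat_emb_def)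

lemma level_unique: "x \<in> level m i \<Longrightarrow> x \<in> level m j \<Longrightarrow> i = j"
  by (simp add: level_def)

lemma lookup_sum_levels:
  fixes fi :: "int \<Rightarrow> 'n::finite laurent"
  assumes lv: "\<And>i. lat_emb ` Poly_Mapping.keys (fi i) \<subseteq> level m i" and fin: "finite I"
  shows "Poly_Mapping.lookup (\<Sum>i\<in>I. fi i) k = (if lvl m k \<in> I then Poly_Mapping.lookup (fi (lvl m k)) k else 0)"
proof -
  have z: "Poly_Mapping.lookup (fi i) k = 0" if "i \<noteq> lvl m k" for i
  proof (rule ccontr)
    assume "Poly_Mapping.lookup (fi i) k \<noteq> 0"
    then have "k \<in> Poly_Mapping.keys (fi i)" by (simp add: in_keys_iff)
    then have "lat_emb k \<in> level m i" using lv by blast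
    then show False using level_unique[OF _ lat_emb_level] that by blast
  qed
  have "Poly_Mapping.lookup (\<Sum>i\<in>I. fi i) k = (\<Sum>i\<in>I. Poly_Mapping.lookup (fi i) k)"
    by (simp add: lookup_sum)
  also have "\<dots> = (if lvl m k \<in> I then Poly_Mapping.lookup (fi (lvl m k)) k else 0)"
  proof (cases "lvl m k \<in> I")
    case True
    then show ?thesis
      using sum.remove[OF fin True, of "\<lambda>i. Poly_Mapping.lookup (fi i) k"] z by simp
  next
    case False
    then show ?thesis using z by (metis (mono_tags, lifting) sum.neutral)
  qed
  finally show ?thesis .
qed

lemma phi_comb: "u + v = 1 \<Longrightarrow> phi m (u *\<^sub>R x + v *\<^sub>R y) = u * phi m x + v * phi m y"
proof -
  assume uv: "u + v = 1"
  have "phi m (u *\<^sub>R x + v *\<^sub>R y) = u * pairM m x + v * pairM m y + (u + v) * real_of_int (snd m)"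
    using uv by (simp add: phi_def pairM_add pairM_scale)
  then show ?thesis by (simp add: phi_def algebra_simps)
qed

lemma phi_level: "x \<in> level m i \<Longrightarrow> phi m x = real_of_int i"
  by (simp add: level_def)

lemma converse_dir:
  fixes f g :: "'n::finite laurent"
  assumes g0: "g \<noteq> 0" and hyp: "newton g \<subseteq> hyp0 m" and mut: "mutable f m g"
  shows "deformation_pair (newton f) m (newton g)"
proof -
  obtain fi where lv: "\<And>i. lat_emb ` Poly_Mapping.keys (fi i) \<subseteq> level m i"
    and fin: "finite {i. fi i \<noteq> 0}" and fdef: "f = (\<Sum>i\<in>{i. fi i \<noteq> 0}. fi i)"
    and hg: "\<And>i::nat. \<exists>h. fi (int i) = h * g ^ i"
    using mut unfolding mutable_def by blast
  define P where "P = newton f"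
  define Q where "Q = newton g"
  have Pcvx: "convex P" and Ppt: "polytope P"
    unfolding P_def newton_def by (auto intro: polytope_convex_hull)
  have Qcvx: "convex Q" unfolding Q_def by (rule finite_keys_newton)
  have Qne: "Q \<noteq> {}" unfolding Q_def using newton_nonempty[OF g0] .
  have Qhyp: "\<And>q. q \<in> Q \<Longrightarrow> pairM m q = 0" using hyp by (auto simp: hyp0_def Q_def)
  have lk: "Poly_Mapping.lookup f k = (if lvl m k \<in> {i. fi i \<noteq> 0} then Poly_Mapping.lookup (fi (lvl m k)) k else 0)" for k
    unfolding fdef by (rule lookup_sum_levels[OF lv fin])
  have keys_sub: "newton (fi j) \<subseteq> P" for j
  proof -
    have "Poly_Mapping.keys (fi j) \<subseteq> Poly_Mapping.keys f"
    proof
      fix k assume k: "k \<in> Poly_Mapping.keys (fi j)"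
      then have "lat_emb k \<in> level m j" using lv by blast
      then have j: "j = lvl m k" using level_unique[OF _ lat_emb_level] by blast
      have "fi j \<noteq> 0" using k by auto
      then show "k \<in> Poly_Mapping.keys f" using k j lk[of k] by (simp add: in_keys_iff)
    qed
    then show ?thesis unfolding P_def newton_def by (intro hull_mono image_mono)
  qed
  define G where "G = {p. \<exists>qb\<in>Q. \<exists>s\<ge>0. phi m p \<le> s \<and> (\<forall>q\<in>Q. p + s *\<^sub>R (q - qb) \<in> P)}"
  define G where "G = {p. \<exists>qb\<in>Q. \<exists>s\<ge>0. phi m p \<le> s \<and> (\<forall>q\<in>Q. p + s *\<^sub>R (q - qb) \<in> P)}"
  have Gkeys: "lat_emb ` Poly_Mapping.keys f \<subseteq> G"
  proof
    fix x assume "x \<in> lat_emb ` Poly_Mapping.keys f"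
    then obtain k where k: "k \<in> Poly_Mapping.keys f" "x = lat_emb k" by blast
    define j where "j = lvl m k"
    have kj: "k \<in> Poly_Mapping.keys (fi j)" using k(1) lk[of k] unfolding j_def
      by (auto simp: in_keys_iff split: if_splits)
    have phix: "phi m x = real_of_int j" unfolding k(2) j_def by (rule phi_level[OF lat_emb_level])
    have xP: "x \<in> P" unfolding P_def k(2) using k(1) by (rule keys_in_newton)
    show "x \<in> G"
    proof (cases "j < 0")
      case True
      obtain q0 where "q0 \<in> Q" using Qne by blast
      then show ?thesis unfolding G_def using True phix xP by (auto intro!: bexI[of _ q0] exI[of _ 0])
    next
      case False
      define n where "n = nat j"
      have jn: "j = int n" using False n_def by simp
      obtain h where h: "fi j = h * g ^ n" using hg[of n] jn by blast
      have nf: "newton (fi j) = minkowski_sum (newton h) ((\<lambda>x. real n *\<^sub>R x) ` Q)"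
        unfolding h Q_def by (simp add: newton_mult newton_power[OF g0])
      have "x \<in> newton (fi j)" unfolding k(2) using kj by (rule keys_in_newton)
      then obtain a q0 where aq: "a \<in> newton h" "q0 \<in> Q" "x = a + real n *\<^sub>R q0"
        unfolding nf minkowski_sum_def by blast
      have "\<forall>q\<in>Q. x + real n *\<^sub>R (q - q0) \<in> P"
      proof
        fix q assume q: "q \<in> Q"
        have "x + real n *\<^sub>R (q - q0) = a + real n *\<^sub>R q" using aq(3) by (simp add: algebra_simps)
        also have "\<dots> \<in> newton (fi j)" unfolding nf minkowski_sum_def using aq(1) q by blast
        finally show "x + real n *\<^sub>R (q - q0) \<in> P" using keys_sub by blast
      qed
      then show ?thesis unfolding G_def using aq(2) phix jn
        by (auto intro!: bexI[of _ q0] exI[of _ "real n"])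
    qed
  qed
  have Gcvx: "convex G"
  proof (rule convexI)
    fix x y and u v :: real assume xG: "x \<in> G" and yG: "y \<in> G" and u: "0 \<le> u" and v: "0 \<le> v" and uv: "u + v = 1"
    obtain qb1 s1 where 1: "qb1 \<in> Q" "s1 \<ge> 0" "phi m x \<le> s1" "\<forall>q\<in>Q. x + s1 *\<^sub>R (q - qb1) \<in> P"
      using xG unfolding G_def by blast
    obtain qb2 s2 where 2: "qb2 \<in> Q" "s2 \<ge> 0" "phi m y \<le> s2" "\<forall>q\<in>Q. y + s2 *\<^sub>R (q - qb2) \<in> P"
      using yG unfolding G_def by blast
    define s where "s = u * s1 + v * s2"
    define qb where "qb = (if s = 0 then qb1 else (u * s1 / s) *\<^sub>R qb1 + (v * s2 / s) *\<^sub>R qb2)"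
    have us1: "u * s1 \<ge> 0" and vs2: "v * s2 \<ge> 0" using u v 1(2) 2(2) by auto
    have s0: "s \<ge> 0" unfolding s_def using us1 vs2 by simp
    have qbQ: "qb \<in> Q"
    proof (cases "s = 0")
      case True then show ?thesis using 1 by (simp add: qb_def)
    next
      case False
      then have "s > 0" using s0 by simp
      have "(u * s1 / s) *\<^sub>R qb1 + (v * s2 / s) *\<^sub>R qb2 \<in> Q"
      proof (rule convexD[OF Qcvx 1(1) 2(1)])
        show "0 \<le> u * s1 / s" "0 \<le> v * s2 / s" using us1 vs2 \<open>s > 0\<close> by auto
        have "u * s1 / s + v * s2 / s = (u * s1 + v * s2) / s" by (simp add: add_divide_distrib)
        then show "u * s1 / s + v * s2 / s = 1" using \<open>s > 0\<close> by (simp add: s_def)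
      qed
      then show ?thesis using False by (simp add: qb_def)
    qed
    have sqb: "s *\<^sub>R qb = (u * s1) *\<^sub>R qb1 + (v * s2) *\<^sub>R qb2"
    proof (cases "s = 0")
      case True
      then have z1: "u * s1 = 0" and z2: "v * s2 = 0" using us1 vs2 unfolding s_def by linarith+
      have "(u * s1) *\<^sub>R qb1 + (v * s2) *\<^sub>R qb2 = 0" by (simp only: z1 z2 scaleR_zero_left add_0_left)
      then show ?thesis using True by simp
    next
      case False
      then show ?thesis by (simp add: qb_def scaleR_add_right)
    qed
    have phiuv: "phi m (u *\<^sub>R x + v *\<^sub>R y) \<le> s"
    proof -
      have "phi m (u *\<^sub>R x + v *\<^sub>R y) = u * phi m x + v * phi m y" by (rule phi_comb[OF uv])
      also have "\<dots> \<le> u * s1 + v * s2"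
        using 1(3) 2(3) u v by (intro add_mono mult_left_mono) auto
      finally show ?thesis by (simp add: s_def)
    qed
    have "\<forall>q\<in>Q. u *\<^sub>R x + v *\<^sub>R y + s *\<^sub>R (q - qb) \<in> P"
    proof
      fix q assume q: "q \<in> Q"
      have "s *\<^sub>R (q - qb) = s *\<^sub>R q - s *\<^sub>R qb" by (simp add: scaleR_diff_right)
      also have "\<dots> = s *\<^sub>R q - ((u * s1) *\<^sub>R qb1 + (v * s2) *\<^sub>R qb2)" by (simp add: sqb)
      also have "\<dots> = u *\<^sub>R (s1 *\<^sub>R (q - qb1)) + v *\<^sub>R (s2 *\<^sub>R (q - qb2))"
        by (simp add: s_def algebra_simps)
      finally have e: "u *\<^sub>R x + v *\<^sub>R y + s *\<^sub>R (q - qb)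
          = u *\<^sub>R (x + s1 *\<^sub>R (q - qb1)) + v *\<^sub>R (y + s2 *\<^sub>R (q - qb2))"
        by (simp add: algebra_simps)
      show "u *\<^sub>R x + v *\<^sub>R y + s *\<^sub>R (q - qb) \<in> P"
        unfolding e using 1(4) 2(4) q u v uv by (intro convexD[OF Pcvx]) auto
    qed
    then show "u *\<^sub>R x + v *\<^sub>R y \<in> G" unfolding G_def using qbQ s0 phiuv by blast
  qed
  have PG: "P \<subseteq> G" unfolding P_def newton_def using Gkeys Gcvx by (rule hull_minimal)
  have Qlp: "lattice_polytope Q"
    unfolding lattice_polytope_def Q_def newton_def lattice_points_def
    using g0 by (intro exI[of _ "lat_emb ` Poly_Mapping.keys g"]) auto
  have summ: "minkowski_summand ((\<lambda>x. real t *\<^sub>R x) ` Q) (P \<inter> level m (int t))" for t :: nat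
  proof -
    define Pt where "Pt = P \<inter> level m (int t)"
    have Ptp: "polytope Pt" unfolding Pt_def by (rule polytope_Int_polyhedron[OF Ppt polyhedron_level])
    have Ptc: "convex Pt" unfolding Pt_def by (intro convex_Int Pcvx convex_level)
    show ?thesis
    proof (cases "t = 0")
      case True
      have "(\<lambda>x. real t *\<^sub>R x) ` Q = {0}" using True Qne by auto
      moreover have "minkowski_sum {0} Pt = Pt" by (auto simp: minkowski_sum_def)
      ultimately show ?thesis unfolding minkowski_summand_def Pt_def[symmetric] using Ptp by metis
    next
      case False
      then have tpos: "real t > 0" by simp
      define S where "S = lat_emb ` Poly_Mapping.keys g"
      have Sfin: "finite S" and Sne: "S \<noteq> {}" and QS: "Q = convex hull S"
        unfolding S_def Q_def newton_def using g0 by auto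
      define C where "C = {x. \<forall>q\<in>Q. x + real t *\<^sub>R q \<in> Pt}"
      have Ceq: "C = \<Inter> ((\<lambda>q. (+) (- (real t *\<^sub>R q)) ` Pt) ` S)"
      proof
        show "C \<subseteq> \<Inter> ((\<lambda>q. (+) (- (real t *\<^sub>R q)) ` Pt) ` S)"
        proof
          fix x assume "x \<in> C"
          then have "x + real t *\<^sub>R q \<in> Pt" if "q \<in> S" for q
            using that hull_subset[of S convex] unfolding C_def QS by blast
          then show "x \<in> \<Inter> ((\<lambda>q. (+) (- (real t *\<^sub>R q)) ` Pt) ` S)"
            by (auto intro!: image_eqI[where x = "x + real t *\<^sub>R _"])
        qed
      next
        show "\<Inter> ((\<lambda>q. (+) (- (real t *\<^sub>R q)) ` Pt) ` S) \<subseteq> C"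
        proof
          fix x assume x: "x \<in> \<Inter> ((\<lambda>q. (+) (- (real t *\<^sub>R q)) ` Pt) ` S)"
          have "S \<subseteq> {q. x + real t *\<^sub>R q \<in> Pt}"
          proof
            fix q assume "q \<in> S"
            then obtain z where "z \<in> Pt" "x = - (real t *\<^sub>R q) + z" using x by blast
            then show "q \<in> {q. x + real t *\<^sub>R q \<in> Pt}" by simp
          qed
          moreover have "convex {q. x + real t *\<^sub>R q \<in> Pt}"
          proof (rule convexI)
            fix a b and u v :: real
            assume a: "a \<in> {q. x + real t *\<^sub>R q \<in> Pt}" and b: "b \<in> {q. x + real t *\<^sub>R q \<in> Pt}"
              and u: "0 \<le> u" and v: "0 \<le> v" and uv: "u + v = 1"
            have "x + real t *\<^sub>R (u *\<^sub>R a + v *\<^sub>R b) = u *\<^sub>R (x + real t *\<^sub>R a) + v *\<^sub>R (x + real t *\<^sub>R b)"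
              using uv by (simp add: algebra_simps flip: scaleR_add_left)
            also have "\<dots> \<in> Pt" using a b u v uv by (intro convexD[OF Ptc]) auto
            finally show "u *\<^sub>R a + v *\<^sub>R b \<in> {q. x + real t *\<^sub>R q \<in> Pt}" by simp
          qed
          ultimately have "Q \<subseteq> {q. x + real t *\<^sub>R q \<in> Pt}" unfolding QS by (rule hull_minimal)
          then show "x \<in> C" unfolding C_def by blast
        qed
      qed
      have Cpoly: "polytope C"
      proof -
        have tp: "polyhedron ((+) (- (real t *\<^sub>R q)) ` Pt)" for q
          using Ptp polytope_translation_eq polytope_imp_polyhedron by blast
        have "polyhedron C" unfolding Ceq
          using Sfin tp by (intro polyhedron_Inter) auto
        moreover obtain q0 where q0: "q0 \<in> S" using Sne by blast
        have "C \<subseteq> (+) (- (real t *\<^sub>R q0)) ` Pt" unfolding Ceq using q0 by blast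
        moreover have "bounded ((+) (- (real t *\<^sub>R q0)) ` Pt)"
          using Ptp polytope_translation_eq polytope_imp_bounded by blast
        ultimately show ?thesis using polytope_eq_bounded_polyhedron bounded_subset by blast
      qed
      have "Pt = minkowski_sum ((\<lambda>x. real t *\<^sub>R x) ` Q) C"
      proof
        show "Pt \<subseteq> minkowski_sum ((\<lambda>x. real t *\<^sub>R x) ` Q) C"
        proof
          fix p assume pPt: "p \<in> Pt"
          then have "p \<in> G" using PG unfolding Pt_def by blast
          then obtain qb s where qb: "qb \<in> Q" "s \<ge> 0" "phi m p \<le> s" "\<forall>q\<in>Q. p + s *\<^sub>R (q - qb) \<in> P"
            unfolding G_def by blast
          have php: "phi m p = real t" using pPt unfolding Pt_def by (simp add: level_def)
          then have st: "s \<ge> real t" using qb(3) by simp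
          then have spos: "s > 0" using tpos by simp
          define c where "c = p - real t *\<^sub>R qb"
          have "c \<in> C" unfolding C_def mem_Collect_eq
          proof (intro ballI)
            fix q assume q: "q \<in> Q"
            define q' where "q' = (1 - real t / s) *\<^sub>R qb + (real t / s) *\<^sub>R q"
            have q'Q: "q' \<in> Q" unfolding q'_def
              using qb(1) q spos st tpos by (intro convexD[OF Qcvx]) (auto simp: field_simps)
            have "c + real t *\<^sub>R q = p + s *\<^sub>R (q' - qb)"
              using spos by (simp add: c_def q'_def algebra_simps)
            then have inP: "c + real t *\<^sub>R q \<in> P" using qb(4) q'Q by simp
            have "pairM m (real t *\<^sub>R (q - qb)) = 0"
              using Qhyp[OF q] Qhyp[OF qb(1)] by (simp add: pairM_scale pairM_diff)
            then have "phi m (p + real t *\<^sub>R (q - qb)) = phi m p" by (rule phi_add_hyp)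
            moreover have "c + real t *\<^sub>R q = p + real t *\<^sub>R (q - qb)" by (simp add: c_def algebra_simps)
            ultimately have "phi m (c + real t *\<^sub>R q) = real t" using php by simp
            then show "c + real t *\<^sub>R q \<in> Pt" using inP unfolding Pt_def level_def by simp
          qed
          moreover have "p = real t *\<^sub>R qb + c" by (simp add: c_def)
          ultimately show "p \<in> minkowski_sum ((\<lambda>x. real t *\<^sub>R x) ` Q) C"
            unfolding minkowski_sum_def using qb(1) by blast
        qed
      next
        show "minkowski_sum ((\<lambda>x. real t *\<^sub>R x) ` Q) C \<subseteq> Pt"
          unfolding minkowski_sum_def C_def by (auto simp: add.commute)
      qed
      then show ?thesis unfolding minkowski_summand_def Pt_def using Cpoly by metis
    qed
  qed
  show ?thesis unfolding deformation_pair_def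
    using Qlp hyp summ unfolding P_def Q_def by blast
qed

definition ind :: "(int ^ 'n) set \<Rightarrow> ('n::finite) laurent" where
  "ind A = Abs_poly_mapping (\<lambda>x. if x \<in> A then 1 else 0)"

lemma lookup_ind: "finite A \<Longrightarrow> Poly_Mapping.lookup (ind A) x = (if x \<in> A then 1 else 0)"
proof -
  assume "finite A"
  moreover have "{x. (if x \<in> A then 1 else 0 :: complex) \<noteq> 0} = A" by auto
  ultimately show ?thesis unfolding ind_def by simp
qed

lemma keys_ind: "finite A \<Longrightarrow> Poly_Mapping.keys (ind A) = A"
  by (auto simp: in_keys_iff lookup_ind split: if_splits)

lemma ind_empty: "ind {} = 0"
  unfolding ind_def by simp

lemma extreme_subset: "x extreme_point_of S \<Longrightarrow> x \<in> T \<Longrightarrow> T \<subseteq> S \<Longrightarrow> x extreme_point_of T"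
  unfolding extreme_point_of_def by blast

lemma convex_shift: "convex S \<Longrightarrow> convex {a. a + w \<in> S}"
proof (rule convexI)
  fix x y and u v :: real
  assume S: "convex S" and x: "x \<in> {a. a + w \<in> S}" and y: "y \<in> {a. a + w \<in> S}"
    and u: "0 \<le> u" and v: "0 \<le> v" and uv: "u + v = 1"
  have "u *\<^sub>R x + v *\<^sub>R y + w = u *\<^sub>R (x + w) + v *\<^sub>R (y + w)"
    using uv by (simp add: algebra_simps flip: scaleR_add_left)
  also have "\<dots> \<in> S" using x y u v uv by (intro convexD[OF S]) auto
  finally show "u *\<^sub>R x + v *\<^sub>R y \<in> {a. a + w \<in> S}" by simp
qed

lemma lattice_polytope_facts:
  assumes "lattice_polytope P"
  obtains S where "finite S" "S \<noteq> {}" "S \<subseteq> lattice_points" "P = convex hull S"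
    "compact P" "convex P" "polytope P"
  using assms unfolding lattice_polytope_def
  by (metis convex_convex_hull finite_imp_compact_convex_hull polytope_convex_hull)

lemma vertices_lattice:
  assumes "finite S" "S \<subseteq> lattice_points" "P = convex hull S"
  shows "finite {v. lat_emb v extreme_point_of P}"
    and "lat_emb ` {v. lat_emb v extreme_point_of P} = {x. x extreme_point_of P}"
proof -
  have sub: "{v. lat_emb v extreme_point_of P} \<subseteq> lat_emb -` S"
    using assms extreme_point_of_convex_hull by blast
  show "finite {v. lat_emb v extreme_point_of P}"
    by (rule finite_subset[OF sub finite_vimageI[OF assms(1) lat_emb_inj]])
  show "lat_emb ` {v. lat_emb v extreme_point_of P} = {x. x extreme_point_of P}"
  proof
    show "{x. x extreme_point_of P} \<subseteq> lat_emb ` {v. lat_emb v extreme_point_of P}"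
    proof
      fix x assume "x \<in> {x. x extreme_point_of P}"
      then have "x extreme_point_of P" "x \<in> S" using assms extreme_point_of_convex_hull by auto
      then show "x \<in> lat_emb ` {v. lat_emb v extreme_point_of P}"
        using assms(2) unfolding lattice_points_def by blast
    qed
  qed auto
qed

lemma forward_dir:
  fixes P Q :: "(real ^ 'n::finite) set"
  assumes lpP: "lattice_polytope P" and dp: "deformation_pair P m Q"
  shows "\<exists>f g :: 'n laurent. normalized f \<and> normalized g \<and> newton f = P \<and> newton g = Q \<and> mutable f m g"
proof -
  have lpQ: "lattice_polytope Q" and Qhyp0: "Q \<subseteq> hyp0 m"
    and summ: "\<And>i::nat. P \<inter> level m (int i) \<noteq> {} \<Longrightarrow>
        minkowski_summand ((\<lambda>x. real i *\<^sub>R x) ` Q) (P \<inter> level m (int i))"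
    using dp unfolding deformation_pair_def by auto
  obtain SQ where SQ: "finite SQ" "SQ \<noteq> {}" "SQ \<subseteq> lattice_points" "Q = convex hull SQ"
    and Qcc: "compact Q" "convex Q" using lattice_polytope_facts[OF lpQ] by metis
  obtain SP where SP: "finite SP" "SP \<noteq> {}" "SP \<subseteq> lattice_points" "P = convex hull SP"
    and Pcc: "compact P" "convex P" using lattice_polytope_facts[OF lpP] by metis
  have Qhyp: "\<And>q. q \<in> Q \<Longrightarrow> pairM m q = 0" using Qhyp0 by (auto simp: hyp0_def)
  define VQ where "VQ = {v. lat_emb v extreme_point_of Q}"
  define VP where "VP = {v. lat_emb v extreme_point_of P}"
  have finVQ: "finite VQ" and EVQ: "lat_emb ` VQ = {x. x extreme_point_of Q}"
    unfolding VQ_def using vertices_lattice[OF SQ(1,3,4)] by auto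
  have finVP: "finite VP" and EVP: "lat_emb ` VP = {x. x extreme_point_of P}"
    unfolding VP_def using vertices_lattice[OF SP(1,3,4)] by auto
  define g where "g = (ind VQ :: 'n laurent)"
  have keysg: "Poly_Mapping.keys g = VQ" unfolding g_def by (rule keys_ind[OF finVQ])
  have newton_g: "newton g = Q"
    unfolding newton_def keysg EVQ using Krein_Milman_Minkowski[OF Qcc] by simp
  have Qne: "Q \<noteq> {}" using SQ by simp
  have g0: "g \<noteq> 0" using newton_g Qne unfolding newton_def by auto
  have ng: "normalized g"
    unfolding normalized_def newton_g using finVQ by (auto simp: g_def lookup_ind VQ_def)
  have exq: "\<exists>q. q \<in> VQ \<and> (\<forall>y\<in>Q. lat_emb (v - smul (nat (lvl m v)) q) + real (nat (lvl m v)) *\<^sub>R y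
              \<in> P \<inter> level m (lvl m v))" if v: "v \<in> VP" for v
  proof -
    define n where "n = nat (lvl m v)"
    have vext: "lat_emb v extreme_point_of P" using v unfolding VP_def by simp
    then have vP: "lat_emb v \<in> P" by (simp add: extreme_point_of_def)
    have vl: "lat_emb v \<in> level m (lvl m v)" by (rule lat_emb_level)
    show ?thesis
    proof (cases "n = 0")
      case True
      obtain q where "q \<in> VQ" using g0 keysg by (metis ex_in_conv keys_eq_empty)
      then show ?thesis using True vP vl unfolding n_def[symmetric] by (auto simp: smul_0)
    next
      case False
      then have ln: "lvl m v = int n" unfolding n_def by simp
      have ne: "P \<inter> level m (int n) \<noteq> {}" using vP vl ln by auto
      obtain C where C: "polytope C" "P \<inter> level m (int n) = minkowski_sum ((\<lambda>x. real n *\<^sub>R x) ` Q) C"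
        using summ[OF ne] unfolding minkowski_summand_def by blast
      have "lat_emb v \<in> minkowski_sum ((\<lambda>x. real n *\<^sub>R x) ` Q) C" using C(2) vP vl ln by auto
      then obtain q' c' where qc: "q' \<in> Q" "c' \<in> C" "lat_emb v = real n *\<^sub>R q' + c'"
        unfolding minkowski_sum_def by blast
      have "lat_emb v extreme_point_of minkowski_sum ((\<lambda>x. real n *\<^sub>R x) ` Q) C"
        by (rule extreme_subset[OF vext]) (use C(2) vP vl ln in auto)
      then have "(real n *\<^sub>R q') extreme_point_of ((\<lambda>x. real n *\<^sub>R x) ` Q)"
        using extreme_minkowski_decomp qc by blast
      then have q'ext: "q' extreme_point_of Q" by (rule iffD1[OF extreme_scale, rotated]) (use False in simp)
      then obtain q where q: "q \<in> VQ" "q' = lat_emb q" using EVQ by blast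
      have ce: "lat_emb (v - smul n q) = c'" using qc(3) q(2) by (simp add: lat_emb_diff lat_emb_smul)
      have "\<forall>y\<in>Q. lat_emb (v - smul n q) + real n *\<^sub>R y \<in> P \<inter> level m (lvl m v)"
      proof
        fix y assume "y \<in> Q"
        then have "real n *\<^sub>R y + c' \<in> minkowski_sum ((\<lambda>x. real n *\<^sub>R x) ` Q) C"
          using qc(2) unfolding minkowski_sum_def by blast
        then show "lat_emb (v - smul n q) + real n *\<^sub>R y \<in> P \<inter> level m (lvl m v)"
          using C(2) ln ce by (simp add: add.commute)
      qed
      then show ?thesis using q(1) unfolding n_def by blast
    qed
  qed
  then obtain qf where qf: "\<And>v. v \<in> VP \<Longrightarrow> qf v \<in> VQ \<and> (\<forall>y\<in>Q. lat_emb (v - smul (nat (lvl m v)) (qf v)) + real (nat (lvl m v)) *\<^sub>R y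
              \<in> P \<inter> level m (lvl m v))"
    by metis
  define Cs where "Cs n = (\<lambda>v. v - smul n (qf v)) ` {v\<in>VP. lvl m v = int n}" for n
  define h where "h n = ind (Cs n)" for n
  define fi where "fi i = (if i < 0 then ind {v\<in>VP. lvl m v = i} else h (nat i) * g ^ nat i)" for i
  have finCs: "finite (Cs n)" for n unfolding Cs_def using finVP by simp
  have keysh: "Poly_Mapping.keys (h n) = Cs n" for n unfolding h_def by (rule keys_ind[OF finCs])
  have N: "newton (h n * g ^ n) \<subseteq> P \<inter> level m (int n)" for n
  proof -
    have eq: "newton (h n * g ^ n) = minkowski_sum (convex hull (lat_emb ` Cs n)) ((\<lambda>x. real n *\<^sub>R x) ` Q)"
      by (simp only: newton_mult newton_power[OF g0] newton_g) (simp add: newton_def keysh)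
    have cvx: "convex (P \<inter> level m (int n))" using Pcc convex_level by (blast intro: convex_Int)
    show ?thesis
    proof
      fix z assume "z \<in> newton (h n * g ^ n)"
      then obtain a y where ay: "a \<in> convex hull (lat_emb ` Cs n)" "y \<in> Q" "z = a + real n *\<^sub>R y"
        unfolding eq minkowski_sum_def by blast
      have "lat_emb ` Cs n \<subseteq> {a. a + real n *\<^sub>R y \<in> P \<inter> level m (int n)}"
      proof
        fix x assume "x \<in> lat_emb ` Cs n"
        then obtain v where v: "v \<in> VP" "lvl m v = int n" "x = lat_emb (v - smul n (qf v))"
          unfolding Cs_def by blast
        then show "x \<in> {a. a + real n *\<^sub>R y \<in> P \<inter> level m (int n)}"
          using qf[OF v(1)] ay(2) by auto
      qed
      then have "convex hull (lat_emb ` Cs n) \<subseteq> {a. a + real n *\<^sub>R y \<in> P \<inter> level m (int n)}"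
        by (rule hull_minimal) (rule convex_shift[OF cvx])
      then show "z \<in> P \<inter> level m (int n)" using ay by blast
    qed
  qed
  have Kfi: "lat_emb ` Poly_Mapping.keys (fi i) \<subseteq> P \<inter> level m i" for i
  proof (cases "i < 0")
    case True
    have "finite {v\<in>VP. lvl m v = i}" using finVP by simp
    then have "Poly_Mapping.keys (fi i) = {v\<in>VP. lvl m v = i}" using True unfolding fi_def
      by (simp add: keys_ind)
    moreover have "lat_emb v \<in> P \<inter> level m i" if "v \<in> VP" "lvl m v = i" for v
    proof -
      have "lat_emb v \<in> P" using that(1) unfolding VP_def extreme_point_of_def by blast
      moreover have "lat_emb v \<in> level m i" using lat_emb_level[of v m] that(2) by simp
      ultimately show ?thesis by blast
    qed
    ultimately show ?thesis by blast
  next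
    case False
    then have "int (nat i) = i" by simp
    then show ?thesis using False N[of "nat i"] keys_in_newton unfolding fi_def by fastforce
  qed
  have L1: "Poly_Mapping.lookup (fi (lvl m v)) v = 1" if v: "v \<in> VP" for v
  proof (cases "lvl m v < 0")
    case True
    have "finite {v\<in>VP. lvl m v = lvl m v}" using finVP by simp
    then show ?thesis using True v unfolding fi_def by (simp add: lookup_ind)
  next
    case False
    define n where "n = nat (lvl m v)"
    have ln: "lvl m v = int n" using False n_def by simp
    have fiv: "fi (lvl m v) = h n * g ^ n" unfolding fi_def using False n_def by simp
    define a where "a = v - smul n (qf v)"
    define b where "b = smul n (qf v)"
    have aC: "a \<in> Cs n" unfolding a_def Cs_def
      by (rule image_eqI[where x=v]) (use v ln in simp_all)
    then have la: "Poly_Mapping.lookup (h n) a = 1" unfolding h_def using finCs by (simp add: lookup_ind)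
    then have ak: "a \<in> Poly_Mapping.keys (h n)" by (simp add: in_keys_iff)
    have qe: "lat_emb (qf v) extreme_point_of newton g" using qf[OF v] newton_g by (simp add: VQ_def)
    have lb: "Poly_Mapping.lookup (g ^ n) b = 1" unfolding b_def by (rule power_vertex[OF ng g0 qe])
    then have bk: "b \<in> Poly_Mapping.keys (g ^ n)" by (simp add: in_keys_iff)
    have ab: "a + b = v" by (simp add: a_def b_def)
    have ev: "lat_emb v = lat_emb a + lat_emb b" using ab lat_emb_add by metis
    have mem: "lat_emb v \<in> minkowski_sum (newton (h n)) (newton (g ^ n))"
      unfolding minkowski_sum_def ev using keys_in_newton[OF ak] keys_in_newton[OF bk] by blast
    have sub: "minkowski_sum (newton (h n)) (newton (g ^ n)) \<subseteq> P"
      using N[of n] unfolding newton_mult by blast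
    have vext: "lat_emb v extreme_point_of P" using v unfolding VP_def by simp
    have ext: "lat_emb v extreme_point_of minkowski_sum (newton (h n)) (newton (g ^ n))"
      by (rule extreme_subset[OF vext mem sub])
    have "Poly_Mapping.lookup (h n * g ^ n) v = Poly_Mapping.lookup (h n) a * Poly_Mapping.lookup (g ^ n) b"
      by (rule vertex_coeff[OF ext ak bk ab])
    then show ?thesis using fiv la lb by simp
  qed
  define I where "I = {i. fi i \<noteq> 0}"
  have finI: "finite I"
  proof (rule finite_subset[OF _ finite_imageI[OF finVP]])
    show "I \<subseteq> lvl m ` VP"
    proof
      fix i assume iI: "i \<in> I"
      show "i \<in> lvl m ` VP"
      proof (rule ccontr)
        assume nI: "i \<notin> lvl m ` VP"
        have "fi i = 0"
        proof (cases "i < 0")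
          case True
          have e: "{v\<in>VP. lvl m v = i} = {}" using nI by blast
          show ?thesis unfolding fi_def if_P[OF True] e ind_empty by (rule refl)
        next
          case False
          have "Cs (nat i) = {}" using nI False unfolding Cs_def by auto
          then show ?thesis using False unfolding fi_def h_def by (simp add: ind_empty)
        qed
        then show False using iI unfolding I_def by simp
      qed
    qed
  qed
  define f where "f = (\<Sum>i\<in>I. fi i)"
  have lvfi: "lat_emb ` Poly_Mapping.keys (fi i) \<subseteq> level m i" for i using Kfi[of i] by blast
  have lookf: "Poly_Mapping.lookup f v = 1" if v: "v \<in> VP" for v
  proof -
    have "fi (lvl m v) \<noteq> 0" using L1[OF v] by auto
    then have "lvl m v \<in> I" unfolding I_def by simp
    then show ?thesis unfolding f_def using lookup_sum_levels[OF lvfi finI, of v] L1[OF v] by simp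
  qed
  have keysfP: "lat_emb ` Poly_Mapping.keys f \<subseteq> P"
  proof -
    have "Poly_Mapping.keys f \<subseteq> (\<Union>i\<in>I. Poly_Mapping.keys (fi i))" unfolding f_def by (rule keys_sum)
    then show ?thesis using Kfi by blast
  qed
  have VPk: "VP \<subseteq> Poly_Mapping.keys f" using lookf by (auto simp: in_keys_iff)
  have newton_f: "newton f = P"
  proof
    show "newton f \<subseteq> P" unfolding newton_def using keysfP Pcc(2) by (rule hull_minimal)
  next
    have "P = convex hull (lat_emb ` VP)" using Krein_Milman_Minkowski[OF Pcc] EVP by simp
    also have "\<dots> \<subseteq> newton f" unfolding newton_def using VPk by (intro hull_mono image_mono)
    finally show "P \<subseteq> newton f" .
  qed
  have nf: "normalized f" unfolding normalized_def newton_f using lookf by (simp add: VP_def)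
  have mf: "mutable f m g" unfolding mutable_def
  proof (intro exI[of _ fi] conjI allI)
    show "finite {i. fi i \<noteq> 0}" using finI unfolding I_def .
    show "f = (\<Sum>i\<in>{i. fi i \<noteq> 0}. fi i)" unfolding f_def I_def ..
    fix i show "lat_emb ` Poly_Mapping.keys (fi i) \<subseteq> level m i" by (rule lvfi)
  next
    fix n :: nat show "\<exists>h'. fi (int n) = h' * g ^ n" unfolding fi_def by (intro exI[of _ "h n"]) simp
  qed
  show ?thesis using nf ng newton_f newton_g mf by blast
qed

theorem lemma2p7:
  fixes dummy :: "'n::finite itself"
  shows "(\<forall>(P :: (real ^ 'n) set) m Q. lattice_polytope P \<and> deformation_pair P m Q \<longrightarrow>
            (\<exists>f g :: 'n laurent. normalized f \<and> normalized g \<and>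
               newton f = P \<and> newton g = Q \<and> mutable f m g))
       \<and> (\<forall>(f :: 'n laurent) g m. normalized f \<and> normalized g \<and> g \<noteq> 0 \<and>
            newton g \<subseteq> hyp0 m \<and> mutable f m g \<longrightarrow>
            deformation_pair (newton f) m (newton g))"
  using forward_dir converse_dir by blast

end
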